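(* Let $(X,m)$ be a $\sigma$-finite measure space, $1\le p<\infty$, and $\{T_t:t>0\}$ a one-parameter family of operators on $L^p(X,m)$ with $(x,t)\mapsto T_tf(x)$ measurable. Let $f\in L^p(X,m)$ satisfy: there is $C_f>0$ (independent of $t$) with $\|T_tf-f\|_{L^\infty(X,m)}\le C_f\,t^{1/p}$ for all $t>0$. Then $$\|f\|_{L^p(X,m)}^p=\lim_{\lambda\to\infty}\lambda^p\,(m\times\mathcal L)\Big(\Big\{(x,t)\in X\times(0,\infty):\frac{|T_tf(x)|}{t^{1/p}}>\lambda\Big\}\Big).$$
   Context: $\mathcal L$ denotes Lebesgue measure on $(0,\infty)$. *)

theory Defs
  imports "HOL-Analysis.Analysis"
begin

end

theory Submission
  imports Defs "HOL-Real_Asymp.Real_Asymp"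
begin

lemma section_eq:
  fixes p l a :: real
  assumes "1 \<le> p" "l > 0" "a \<ge> 0"
  shows "{t. t > 0 \<and> a / t powr (1/p) > l} = {0<..<(a/l) powr p}"
proof (intro set_eqI iffI)
  fix t assume "t \<in> {t. t > 0 \<and> a / t powr (1/p) > l}"
  then have t: "t > 0" and h: "a / t powr (1/p) > l" by auto
  have s: "t powr (1/p) > 0" using t by simp
  have "t powr (1/p) < a / l" using h s assms by (simp add: field_simps)
  then have "(t powr (1/p)) powr p < (a/l) powr p"
    using s assms by (intro powr_less_mono2) auto
  also have "(t powr (1/p)) powr p = t" using t assms by (simp add: powr_powr)
  finally show "t \<in> {0<..<(a/l) powr p}" using t by simp
next
  fix t assume "t \<in> {0<..<(a/l) powr p}"
  then have t: "t > 0" and h: "t < (a/l) powr p" by auto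
  have al: "a / l > 0" using h t assms(2,3) by (cases "a = 0") auto
  have s: "t powr (1/p) > 0" using t by simp
  have "t powr (1/p) < ((a/l) powr p) powr (1/p)"
    using h t assms by (intro powr_less_mono2) auto
  also have "((a/l) powr p) powr (1/p) = a / l" using al assms by (simp add: powr_powr)
  finally have "t powr (1/p) < a / l" .
  then have "a / t powr (1/p) > l" using s assms by (simp add: field_simps)
  then show "t \<in> {t. t > 0 \<and> a / t powr (1/p) > l}" using t by simp
qed

theorem mainTheorem5:
  fixes M :: "'a measure" and p :: real
    and T :: "real \<Rightarrow> ('a \<Rightarrow> real) \<Rightarrow> 'a \<Rightarrow> real"
    and f :: "'a \<Rightarrow> real" and C :: real
  assumes "sigma_finite_measure M"
    and "1 \<le> p"
    and "f \<in> borel_measurable M"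
    and "integrable M (\<lambda>x. \<bar>f x\<bar> powr p)"
    and "(\<lambda>(x, t). T t f x) \<in> borel_measurable (M \<Otimes>\<^sub>M lborel)"
    and "C > 0"
    and "\<forall>t>0. AE x in M. \<bar>T t f x - f x\<bar> \<le> C * t powr (1 / p)"
  shows "((\<lambda>l. ennreal (l powr p) *
            emeasure (M \<Otimes>\<^sub>M lborel)
              {(x, t). x \<in> space M \<and> t > 0 \<and> \<bar>T t f x\<bar> / t powr (1 / p) > l})
          \<longlongrightarrow> (\<integral>\<^sup>+ x. ennreal (\<bar>f x\<bar> powr p) \<partial>M)) at_top"
proof -
  interpret M: sigma_finite_measure M by fact
  interpret P: pair_sigma_finite M lborel
    by (simp add: M.sigma_finite_measure_axioms lborel.sigma_finite_measure_axioms pair_sigma_finite.intro)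
  note fm[measurable] = assms(3)
  define g where "g z = T (snd z) f (fst z)" for z
  have gm[measurable]: "g \<in> borel_measurable (M \<Otimes>\<^sub>M lborel)"
    using assms(5) unfolding g_def by (simp add: case_prod_beta')
  have p0: "p > 0" using assms(2) by simp
  define A where "A a = {z \<in> space (M \<Otimes>\<^sub>M lborel). snd z > 0 \<and> \<bar>f (fst z)\<bar> / snd z powr (1/p) > a}" for a
  define E where "E a = {z \<in> space (M \<Otimes>\<^sub>M lborel). snd z > 0 \<and> \<bar>g z\<bar> / snd z powr (1/p) > a}" for a
  have Asets: "A a \<in> sets (M \<Otimes>\<^sub>M lborel)" for a unfolding A_def by measurable
  have Esets: "E a \<in> sets (M \<Otimes>\<^sub>M lborel)" for a unfolding E_def by measurable
  have Eeq: "{(x, t). x \<in> space M \<and> t > 0 \<and> \<bar>T t f x\<bar> / t powr (1 / p) > l} = E l" for l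
    by (auto simp: E_def g_def space_pair_measure)
  have AE1: "AE t in lborel. AE x in M. t > 0 \<longrightarrow> \<bar>T t f x - f x\<bar> \<le> C * t powr (1 / p)"
  proof (rule AE_I2)
    fix t show "AE x in M. t > 0 \<longrightarrow> \<bar>T t f x - f x\<bar> \<le> C * t powr (1 / p)"
    proof (rule AE_impI)
      assume "t > 0" then show "AE x in M. \<bar>T t f x - f x\<bar> \<le> C * t powr (1 / p)"
        using assms(7) by simp
    qed
  qed
  have Pset: "{z \<in> space (M \<Otimes>\<^sub>M lborel). snd z > 0 \<longrightarrow> \<bar>g z - f (fst z)\<bar> \<le> C * snd z powr (1 / p)}
      \<in> sets (M \<Otimes>\<^sub>M lborel)" by measurable
  have AE2: "AE z in M \<Otimes>\<^sub>M lborel. snd z > 0 \<longrightarrow> \<bar>g z - f (fst z)\<bar> \<le> C * snd z powr (1 / p)"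
  proof -
    have "AE x in M. AE t in lborel. t > 0 \<longrightarrow> \<bar>T t f x - f x\<bar> \<le> C * t powr (1 / p)"
      using AE1 P.AE_commute[of "\<lambda>x t. t > 0 \<longrightarrow> \<bar>T t f x - f x\<bar> \<le> C * t powr (1 / p)"] Pset
      by (simp add: g_def)
    then show ?thesis
      using P.AE_pair_iff[of "\<lambda>x t. t > 0 \<longrightarrow> \<bar>T t f x - f x\<bar> \<le> C * t powr (1 / p)"] Pset
      by (simp add: g_def)
  qed
  define R where "R = integral\<^sup>L M (\<lambda>x. \<bar>f x\<bar> powr p)"
  have R0: "R \<ge> 0" unfolding R_def by simp
  have IR: "(\<integral>\<^sup>+ x. ennreal (\<bar>f x\<bar> powr p) \<partial>M) = ennreal R"
    unfolding R_def using assms(4) by (intro nn_integral_eq_integral) auto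
  have Ameas: "emeasure (M \<Otimes>\<^sub>M lborel) (A a) = ennreal (R / a powr p)" if a: "a > 0" for a
  proof -
    have "emeasure (M \<Otimes>\<^sub>M lborel) (A a) = (\<integral>\<^sup>+x. emeasure lborel (Pair x -` A a) \<partial>M)"
      by (rule lborel.emeasure_pair_measure_alt[OF Asets])
    also have "\<dots> = (\<integral>\<^sup>+x. ennreal (\<bar>f x\<bar> powr p) * ennreal (1 / a powr p) \<partial>M)"
    proof (rule nn_integral_cong)
      fix x assume x: "x \<in> space M"
      have "Pair x -` A a = {t. t > 0 \<and> \<bar>f x\<bar> / t powr (1/p) > a}"
        using x by (auto simp: A_def space_pair_measure)
      also have "\<dots> = {0<..<(\<bar>f x\<bar>/a) powr p}" by (rule section_eq[OF assms(2) a]) simp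
      finally show "emeasure lborel (Pair x -` A a) = ennreal (\<bar>f x\<bar> powr p) * ennreal (1 / a powr p)"
        using a by (simp add: ennreal_mult[symmetric] powr_divide)
    qed
    also have "\<dots> = (\<integral>\<^sup>+x. ennreal (\<bar>f x\<bar> powr p) \<partial>M) * ennreal (1 / a powr p)"
      by (rule nn_integral_multc) measurable
    also have "\<dots> = ennreal (R / a powr p)"
      using R0 by (simp add: IR ennreal_mult[symmetric])
    finally show ?thesis .
  qed
  have lower: "ennreal (R * (l powr p / (l + C) powr p)) \<le> ennreal (l powr p) * emeasure (M \<Otimes>\<^sub>M lborel) (E l)"
    if l: "l > C" for l
  proof -
    have "emeasure (M \<Otimes>\<^sub>M lborel) (A (l + C)) \<le> emeasure (M \<Otimes>\<^sub>M lborel) (E l)"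
    proof (rule emeasure_mono_AE[OF _ Esets])
      show "AE z in M \<Otimes>\<^sub>M lborel. z \<in> A (l + C) \<longrightarrow> z \<in> E l"
        using AE2
      proof eventually_elim
        case (elim z)
        show ?case
        proof
          assume z: "z \<in> A (l + C)"
          define s where "s = snd z powr (1/p)"
          have s: "s > 0" using z by (simp add: A_def s_def)
          have "l + C < \<bar>f (fst z)\<bar> / s" using z by (simp add: A_def s_def)
          then have "\<bar>f (fst z)\<bar> > (l + C) * s" using s by (simp add: pos_less_divide_eq)
          moreover have "\<bar>g z - f (fst z)\<bar> \<le> C * s" using elim z by (simp add: A_def s_def)
          ultimately have "\<bar>g z\<bar> > l * s" by (simp add: algebra_simps abs_if split: if_splits)
          then have "l < \<bar>g z\<bar> / s" using s by (simp add: pos_less_divide_eq)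
          then show "z \<in> E l" using z by (simp add: A_def E_def s_def)
        qed
      qed
    qed
    then have "ennreal (l powr p) * emeasure (M \<Otimes>\<^sub>M lborel) (A (l + C)) \<le> ennreal (l powr p) * emeasure (M \<Otimes>\<^sub>M lborel) (E l)"
      by (rule mult_left_mono) simp
    moreover have "ennreal (l powr p) * emeasure (M \<Otimes>\<^sub>M lborel) (A (l + C)) = ennreal (R * (l powr p / (l + C) powr p))"
      using l assms(6) R0 by (simp add: Ameas ennreal_mult[symmetric])
    ultimately show ?thesis by simp
  qed
  have upper: "ennreal (l powr p) * emeasure (M \<Otimes>\<^sub>M lborel) (E l) \<le> ennreal (R * (l powr p / (l - C) powr p))"
    if l: "l > C" for l
  proof -
    have "emeasure (M \<Otimes>\<^sub>M lborel) (E l) \<le> emeasure (M \<Otimes>\<^sub>M lborel) (A (l - C))"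
    proof (rule emeasure_mono_AE[OF _ Asets])
      show "AE z in M \<Otimes>\<^sub>M lborel. z \<in> E l \<longrightarrow> z \<in> A (l - C)"
        using AE2
      proof eventually_elim
        case (elim z)
        show ?case
        proof
          assume z: "z \<in> E l"
          define s where "s = snd z powr (1/p)"
          have s: "s > 0" using z by (simp add: E_def s_def)
          have "l < \<bar>g z\<bar> / s" using z by (simp add: E_def s_def)
          then have "\<bar>g z\<bar> > l * s" using s by (simp add: pos_less_divide_eq)
          moreover have "\<bar>g z - f (fst z)\<bar> \<le> C * s" using elim z by (simp add: E_def s_def)
          ultimately have "\<bar>f (fst z)\<bar> > (l - C) * s" by (simp add: algebra_simps abs_if split: if_splits)
          then have "l - C < \<bar>f (fst z)\<bar> / s" using s by (simp add: pos_less_divide_eq)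
          then show "z \<in> A (l - C)" using z by (simp add: A_def E_def s_def)
        qed
      qed
    qed
    then have "ennreal (l powr p) * emeasure (M \<Otimes>\<^sub>M lborel) (E l) \<le> ennreal (l powr p) * emeasure (M \<Otimes>\<^sub>M lborel) (A (l - C))"
      by (rule mult_left_mono) simp
    moreover have "ennreal (l powr p) * emeasure (M \<Otimes>\<^sub>M lborel) (A (l - C)) = ennreal (R * (l powr p / (l - C) powr p))"
      using l assms(6) R0 by (simp add: Ameas ennreal_mult[symmetric])
    ultimately show ?thesis by simp
  qed
  have lim1: "((\<lambda>l. l / (l + C)) \<longlongrightarrow> 1) at_top" by real_asymp
  have lim2: "((\<lambda>l. l / (l - C)) \<longlongrightarrow> 1) at_top" by real_asymp
  have L1: "((\<lambda>l. ennreal (R * (l powr p / (l + C) powr p))) \<longlongrightarrow> ennreal R) at_top"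
  proof -
    have "((\<lambda>l. R * ((l / (l + C)) powr p)) \<longlongrightarrow> R * (1 powr p)) at_top"
      by (intro tendsto_intros lim1) auto
    moreover have "eventually (\<lambda>l. R * ((l / (l + C)) powr p) = R * (l powr p / (l + C) powr p)) at_top"
      using eventually_gt_at_top[of 0] by (rule eventually_mono) (use assms(6) in \<open>simp add: powr_divide\<close>)
    ultimately have "((\<lambda>l. R * (l powr p / (l + C) powr p)) \<longlongrightarrow> R) at_top"
      using tendsto_cong by fastforce
    then show ?thesis by (rule tendsto_ennrealI)
  qed
  have L2: "((\<lambda>l. ennreal (R * (l powr p / (l - C) powr p))) \<longlongrightarrow> ennreal R) at_top"
  proof -
    have "((\<lambda>l. R * ((l / (l - C)) powr p)) \<longlongrightarrow> R * (1 powr p)) at_top"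
      by (intro tendsto_intros lim2) auto
    moreover have "eventually (\<lambda>l. R * ((l / (l - C)) powr p) = R * (l powr p / (l - C) powr p)) at_top"
      using eventually_gt_at_top[of C] by (rule eventually_mono) (use assms(6) in \<open>simp add: powr_divide\<close>)
    ultimately have "((\<lambda>l. R * (l powr p / (l - C) powr p)) \<longlongrightarrow> R) at_top"
      using tendsto_cong by fastforce
    then show ?thesis by (rule tendsto_ennrealI)
  qed
  show ?thesis
    unfolding Eeq IR
  proof (rule tendsto_sandwich[OF _ _ L1 L2])
    show "\<forall>\<^sub>F n in at_top. ennreal (R * (n powr p / (n + C) powr p)) \<le> ennreal (n powr p) * emeasure (M \<Otimes>\<^sub>M lborel) (E n)"
      using eventually_gt_at_top[of C] by (rule eventually_mono) (rule lower)
    show "\<forall>\<^sub>F n in at_top. ennreal (n powr p) * emeasure (M \<Otimes>\<^sub>M lborel) (E n) \<le> ennreal (R * (n powr p / (n - C) powr p))"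
      using eventually_gt_at_top[of C] by (rule eventually_mono) (rule upper)
  qed
qed

end
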